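(* Let $r_{\rm A}>0$, $\theta_{\rm A}\in\,]0,\pi/2[$, and let $0<x_{\rm B}<x_{\rm A}$ be defined by $x_{\rm A}+x_{\rm B}=2r_{\rm A}$, $x_{\rm A}-x_{\rm B}=2r_{\rm A}\cos\theta_{\rm A}$ (so that $\sqrt{x_{\rm B}/x_{\rm A}}=\tan(\theta_{\rm A}/2)$ and $\sqrt{x_{\rm A}x_{\rm B}}=r_{\rm A}\sin\theta_{\rm A}$). Define $$v_{\rm A}(\eta)=\frac{\eta-\sqrt{x_{\rm B}/x_{\rm A}}}{\sqrt{(x_{\rm A}+x_{\rm B})/2-\eta\sqrt{x_{\rm A}x_{\rm B}}}}.$$ Then $\eta\mapsto v_{\rm A}(\eta)$ is a bijection from $]-\infty,1[$ onto $]-\infty,v_E[$, $v_E=\sqrt{2/x_{\rm A}}$, and for every $\eta\in\,]-\infty,1[$: $$T_D^S(\eta)=T_D^R(v_{\rm A}(\eta)),\qquad H^S(\eta)=H^R(v_{\rm A}(\eta)),$$ where $H^S(\eta)=\dfrac{\eta^2-1}{2r_{\rm A}(1-\eta\sin\theta_{\rm A})}$ and $H^R(v)=\tfrac12v^2-\tfrac1{x_{\rm A}}$.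
   Context: Kepler problem normalized as $\ddot q=-q/|q|^3$, center ${\rm O}$ at the origin. $T_D^S(\eta)$ is the elapsed time of the direct Keplerian arc from ${\rm A}=(r_{\rm A}\cos\theta_{\rm A},r_{\rm A}\sin\theta_{\rm A})$ to ${\rm B}=(-r_{\rm A}\cos\theta_{\rm A},r_{\rm A}\sin\theta_{\rm A})$ lying on the conic $r=r_{\rm A}(1-\eta\sin\theta_{\rm A})/(1-\eta\sin\theta)$ (polar coordinates about ${\rm O}$), traversed with $\theta$ increasing from $\theta_{\rm A}$ to $\pi-\theta_{\rm A}$; explicitly $T_D^S(\eta)=\int_{\theta_{\rm A}}^{\pi-\theta_{\rm A}}r_{\rm A}^{3/2}(1-\eta\sin\theta_{\rm A})^{3/2}(1-\eta\sin\theta)^{-2}{\rm d}\theta$; $H^S(\eta)$ is its energy $|\dot q|^2/2-1/|q|$. $T_D^R(v)$, for $v<\sqrt{2/x_{\rm A}}$, is the first time after $t_{\rm A}$ (minus $t_{\rm A}$) at which the solution of $\ddot x=-1/x^2$ with $x(t_{\rm A})=x_{\rm A}$, $\dot x(t_{\rm A})=v$ reaches $x_{\rm B}$ (this happens before any collision with $0$); $H^R(v)$ is its energy. *)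

theory Defs
  imports "HOL-Analysis.Analysis"
begin

text \<open>Elapsed time of the direct Keplerian arc (explicit integral from the paper).\<close>
definition TDS :: "real \<Rightarrow> real \<Rightarrow> real \<Rightarrow> real" where
  "TDS rA thA eta = integral {thA..pi - thA}
     (\<lambda>th. rA powr (3/2) * (1 - eta * sin thA) powr (3/2) / (1 - eta * sin th)^2)"

definition HS :: "real \<Rightarrow> real \<Rightarrow> real \<Rightarrow> real" where
  "HS rA thA eta = (eta^2 - 1) / (2 * rA * (1 - eta * sin thA))"

text \<open>x solves x'' = -1/x^2 on [0,T] (time measured from t_A), x(0)=x0, x'(0)=v,
  staying positive (no collision).\<close>
definition radial_sol :: "real \<Rightarrow> real \<Rightarrow> real \<Rightarrow> (real \<Rightarrow> real) \<Rightarrow> bool" where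
  "radial_sol x0 v T x \<longleftrightarrow> 0 \<le> T \<and> x 0 = x0 \<and> (\<forall>t\<in>{0..T}. 0 < x t) \<and>
     (\<exists>x'. x' 0 = v \<and> (\<forall>t\<in>{0..T}. (x has_real_derivative x' t) (at t within {0..T}) \<and>
        (x' has_real_derivative (- 1 / (x t)^2)) (at t within {0..T})))"

definition TDR :: "real \<Rightarrow> real \<Rightarrow> real \<Rightarrow> real" where
  "TDR xA xB v = (THE T. \<exists>x. radial_sol xA v T x \<and> x T = xB \<and> (\<forall>t\<in>{0..<T}. x t \<noteq> xB))"

definition HR :: "real \<Rightarrow> real \<Rightarrow> real" where
  "HR xA v = v^2 / 2 - 1 / xA"

definition vA :: "real \<Rightarrow> real \<Rightarrow> real \<Rightarrow> real" where
  "vA xA xB eta = (eta - sqrt (xB / xA)) / sqrt ((xA + xB) / 2 - eta * sqrt (xA * xB))"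

end

theory Submission
  imports Defs
begin


lemma Q_pos:
  fixes eta z :: real assumes "eta < 1" "0 \<le> z"
  shows "0 < 1 + z^2 - 2*eta*z"
proof (cases "eta \<le> 0")
  case True then have "eta * z \<le> 0" using assms by (simp add: mult_nonpos_nonneg)
  moreover have "0 \<le> z^2" by simp
  ultimately show ?thesis by linarith
next
  case False
  have "1 + z^2 - 2*eta*z = (z-eta)^2 + (1 - eta^2)" by (simp add: power2_eq_square algebra_simps)
  moreover have "eta^2 < 1" using False assms by (simp add: abs_square_less_1)
  moreover have "0 \<le> (z-eta)^2" by simp
  ultimately show ?thesis by linarith
qed

lemma aux_en: "(p::real) \<noteq> 0 \<Longrightarrow> (a - z)^2/p/2 - (a^2 - 1)/(2*p) = (1 + z^2 - 2*a*z)/(2*p)"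
proof -
  assume p: "p \<noteq> 0"
  have "(a - z)^2/p/2 - (a^2 - 1)/(2*p) = ((a - z)^2 - (a^2 - 1))/(2*p)"
    by (simp add: diff_divide_distrib)
  also have "(a - z)^2 - (a^2 - 1) = 1 + z^2 - 2*a*z" by (simp add: power2_eq_square algebra_simps)
  finally show ?thesis .
qed

lemma aux_X: fixes p q a eta :: real assumes p: "0 < p" and q: "q \<noteq> 0"
  shows "2*p * (- ((2*a - 2*eta) * (q^2/(4*(p * sqrt p))) * inverse (q ^ Suc (Suc 0)))) = (eta - a) / sqrt p"
proof -
  have s: "sqrt p \<noteq> 0" using p by simp
  have k: "(q^2/(4*(p * sqrt p))) * inverse (q ^ Suc (Suc 0)) = 1 / (4*(p * sqrt p))"
    using q by (simp add: power2_eq_square field_simps)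
  have "2*p * (- ((2*a - 2*eta) * (q^2/(4*(p * sqrt p))) * inverse (q ^ Suc (Suc 0))))
      = 2*p * (- ((2*a - 2*eta) * ((q^2/(4*(p * sqrt p))) * inverse (q ^ Suc (Suc 0)))))" by (metis mult.assoc)
  also have "\<dots> = 2*p * (- ((2*a - 2*eta) * (1 / (4*(p * sqrt p)))))" unfolding k ..
  also have "\<dots> = (eta - a) / sqrt p" using p s by (simp add: field_simps)
  finally show ?thesis .
qed

lemma aux_V: fixes p q :: real assumes p: "0 < p" and q: "q \<noteq> 0"
  shows "(- (q^2 / (4*(p * sqrt p)))) / sqrt p = - 1 / (2*p/q)^2"
proof -
  have s: "sqrt p * sqrt p = p" using p by simp
  have "(- (q^2 / (4*(p * sqrt p)))) / sqrt p = - (q^2 / (4*(p * (sqrt p * sqrt p))))" by (simp add: mult.assoc)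
  also have "\<dots> = - (q^2 / (4*p^2))" unfolding s by (simp add: power2_eq_square)
  also have "\<dots> = - 1 / (2*p/q)^2" using p q by (simp add: power_divide field_simps power2_eq_square)
  finally show ?thesis .
qed

locale radial_setup =
  fixes p eta t0 :: real
  assumes p: "0 < p" and eta: "eta < 1" and t0: "0 < t0" "t0 < 1"
begin

definition "Q z = 1 + z^2 - 2*eta*z"
definition "PP = p * sqrt p"
definition "kk z = 4 * PP / (Q z)^2"
definition "tau z = integral {0..z} kk"

lemma Qpos: "0 \<le> z \<Longrightarrow> 0 < Q z" unfolding Q_def using Q_pos eta by auto
lemma PPpos: "0 < PP" unfolding PP_def using p by simp
lemma kkpos: "0 \<le> z \<Longrightarrow> 0 < kk z" unfolding kk_def using PPpos Qpos[of z] by (auto intro!: divide_pos_pos)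

lemma kk_cont: "continuous_on {0..b} kk"
  unfolding kk_def Q_def
  apply (intro continuous_intros)
  using Qpos unfolding Q_def by (metis atLeastAtMost_iff less_irrefl power_not_zero)

lemma tau_deriv: assumes "0 < z" shows "(tau has_real_derivative kk z) (at z)"
proof -
  have "(tau has_real_derivative kk z) (at z within {0..z+1})"
    unfolding tau_def using integral_has_real_derivative[OF kk_cont, of z "z+1"] assms by auto
  moreover have "at z within {0..z+1} = at z"
    by (rule at_within_interior) (use assms in auto)
  ultimately show ?thesis by simp
qed

lemma tau_cont: "continuous_on {0..b} tau"
  unfolding tau_def by (rule indefinite_integral_continuous_1) (rule integrable_continuous_real[OF kk_cont])

lemma tau_less: assumes "0 \<le> a" "a < b" shows "tau a < tau b"
proof (rule DERIV_pos_imp_increasing_open[OF assms(2)])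
  fix x assume "a < x" "x < b"
  then show "\<exists>y. (tau has_real_derivative y) (at x) \<and> 0 < y"
    using tau_deriv kkpos assms by (meson less_eq_real_def order_le_less_trans)
next
  show "continuous_on {a..b} tau"
    by (rule continuous_on_subset[OF tau_cont[of b]]) (use assms in auto)
qed

lemma tau_le_iff: assumes "0 \<le> a" "0 \<le> b" shows "tau a \<le> tau b \<longleftrightarrow> a \<le> b"
  using tau_less assms by (metis linorder_not_less order_less_imp_le order_less_le)

lemma tau_eq_iff: assumes "0 \<le> a" "0 \<le> b" shows "tau a = tau b \<longleftrightarrow> a = b"
  using tau_le_iff[OF assms] tau_le_iff[OF assms(2,1)] by auto

definition "NN = 1/t0 + 1"
definition "Zr = inv_into {0..NN} tau"

lemma NN: "0 < NN" "1/t0 < NN"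
proof -
  have "0 < 1/t0" using t0 by simp
  then show "0 < NN" "1/t0 < NN" unfolding NN_def by linarith+
qed

lemma tau_inj: "inj_on tau {0..NN}"
  by (rule inj_onI) (use tau_eq_iff in auto)

lemma tau_image: "tau ` {0..NN} = {tau 0..tau NN}"
proof
  show "tau ` {0..NN} \<subseteq> {tau 0..tau NN}" using tau_le_iff NN by auto
  show "{tau 0..tau NN} \<subseteq> tau ` {0..NN}"
  proof
    fix y assume "y \<in> {tau 0..tau NN}"
    then obtain x where "0 \<le> x" "x \<le> NN" "tau x = y"
      using IVT'[of tau 0 y NN, OF _ _ _ tau_cont] NN by auto
    then show "y \<in> tau ` {0..NN}" by auto
  qed
qed

lemma Zr_tau: "z \<in> {0..NN} \<Longrightarrow> Zr (tau z) = z"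
  unfolding Zr_def by (rule inv_into_f_f[OF tau_inj])

lemma Zr_mem: "y \<in> {tau 0..tau NN} \<Longrightarrow> Zr y \<in> {0..NN} \<and> tau (Zr y) = y"
  unfolding Zr_def using tau_image
  by (metis inv_into_into f_inv_into_f)

lemma Zr_cont: "continuous_on {tau 0..tau NN} Zr"
proof -
  have "\<forall>x\<in>{0..NN}. Zr (tau x) = x" using Zr_tau by auto
  from continuous_on_inv[OF tau_cont[of NN] compact_Icc this] show ?thesis using tau_image by simp
qed

lemma Zr_deriv: assumes "tau 0 < y" "y < tau NN"
  shows "(Zr has_real_derivative inverse (kk (Zr y))) (at y)"
proof (rule DERIV_inverse_function[where f=tau and a="tau 0" and b="tau NN"])
  have m: "Zr y \<in> {0..NN}" "tau (Zr y) = y" using Zr_mem assms by auto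
  then have "Zr y \<noteq> 0" using assms by auto
  then have "0 < Zr y" using m by auto
  then show "(tau has_real_derivative kk (Zr y)) (at (Zr y))" by (rule tau_deriv)
  show "kk (Zr y) \<noteq> 0" using kkpos m by (metis atLeastAtMost_iff less_irrefl)
  show "tau 0 < y" "y < tau NN" by fact+
  show "\<And>y. tau 0 < y \<Longrightarrow> y < tau NN \<Longrightarrow> tau (Zr y) = y" using Zr_mem by auto
  show "isCont Zr y"
    using continuous_on_interior[OF Zr_cont, of y] assms by auto
qed

definition "TT = tau (1/t0) - tau t0"
definition "Z t = Zr (t + tau t0)"
definition "X t = 2*p / Q (Z t)"
definition "V t = (eta - Z t) / sqrt p"

lemma t0_le_t1: "t0 < 1/t0"
proof -
  have "t0 * t0 < 1 * 1" using t0 by (intro mult_strict_mono) auto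
  then show ?thesis using t0 by (simp add: field_simps)
qed

lemma TT_pos: "0 < TT" unfolding TT_def using tau_less[OF _ t0_le_t1] t0 by auto

lemma range: assumes "t \<in> {0..TT}" shows "tau 0 < t + tau t0" "t + tau t0 < tau NN"
  "t + tau t0 \<in> {tau 0..tau NN}"
proof -
  have "tau 0 < tau t0" using tau_less t0 by auto
  moreover have "tau (1/t0) < tau NN" using tau_less NN t0 by auto
  ultimately show "tau 0 < t + tau t0" "t + tau t0 < tau NN" "t + tau t0 \<in> {tau 0..tau NN}"
    using assms unfolding TT_def by auto
qed

lemma Z_tau: assumes "t \<in> {0..TT}" shows "tau (Z t) = t + tau t0" "0 \<le> Z t"
  using Zr_mem[OF range(3)[OF assms]] unfolding Z_def by auto

lemma Z_bounds: assumes "t \<in> {0..TT}" shows "t0 \<le> Z t" "Z t \<le> 1/t0"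
proof -
  have "tau t0 \<le> tau (Z t)" "tau (Z t) \<le> tau (1/t0)" using Z_tau[OF assms] assms unfolding TT_def by auto
  moreover have "0 \<le> Z t" using Z_tau(2)[OF assms] .
  moreover have "0 \<le> 1/t0" "0 \<le> t0" using t0 by auto
  ultimately show "t0 \<le> Z t" "Z t \<le> 1/t0" using tau_le_iff[of t0 "Z t"] tau_le_iff[of "Z t" "1/t0"] by auto
qed

lemma Z_lt: assumes "t \<in> {0..<TT}" shows "Z t < 1/t0"
proof -
  have tt: "t \<in> {0..TT}" using assms by auto
  have "tau (Z t) < tau (1/t0)" using Z_tau[OF tt] assms unfolding TT_def by auto
  moreover have "0 \<le> Z t" using Z_tau(2)[OF tt] .
  moreover have "0 \<le> 1/t0" using t0 by simp
  ultimately show ?thesis using tau_le_iff[of "1/t0" "Z t"] by (meson not_le order_less_irrefl)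
qed

lemma Z0: "Z 0 = t0" unfolding Z_def using Zr_tau[of t0] NN t0 t0_le_t1 by auto
lemma ZT: "Z TT = 1/t0" unfolding Z_def TT_def using Zr_tau[of "1/t0"] NN t0 by auto

lemma Z_deriv: assumes "t \<in> {0..TT}" shows "(Z has_real_derivative (Q (Z t))^2 / (4*PP)) (at t)"
proof -
  have "((\<lambda>t. Zr (t + tau t0)) has_real_derivative inverse (kk (Zr (t + tau t0))) * 1) (at t)"
    by (rule DERIV_chain2[OF Zr_deriv]) (use range[OF assms] in \<open>auto intro!: derivative_eq_intros\<close>)
  then show ?thesis unfolding Z_def[abs_def] kk_def by (simp add: Z_def)
qed

lemma Qt0: "Q (Z t) > 0" if "t \<in> {0..TT}" using Qpos Z_tau[OF that] by auto

lemma X_deriv: assumes "t \<in> {0..TT}" shows "(X has_real_derivative V t) (at t)"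
proof -
  have q: "Q (Z t) \<noteq> 0" using Qt0[OF assms] by auto
  have dQ: "(Q has_real_derivative 2 * Z t - 2*eta) (at (Z t))"
    unfolding Q_def[abs_def] by (auto intro!: derivative_eq_intros)
  have dQZ: "((\<lambda>t. Q (Z t)) has_real_derivative (2 * Z t - 2*eta) * ((Q (Z t))^2/(4*PP))) (at t)"
    by (rule DERIV_chain2[OF dQ Z_deriv[OF assms]])
  have dX: "((\<lambda>t. 2*p * inverse (Q (Z t))) has_real_derivative
      2*p * (- ((2 * Z t - 2*eta) * ((Q (Z t))^2/(4*PP)) * inverse (Q (Z t) ^ Suc (Suc 0))))) (at t)"
    by (rule DERIV_cmult[OF DERIV_inverse_fun[OF dQZ q]])
  have Xe: "X = (\<lambda>t. 2*p * inverse (Q (Z t)))" by (rule ext) (simp add: X_def divide_inverse)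
  show ?thesis unfolding Xe V_def using dX[unfolded PP_def aux_X[OF p q]] .
qed

lemma V_deriv: assumes "t \<in> {0..TT}" shows "(V has_real_derivative - 1 / (X t)^2) (at t)"
proof -
  have q: "Q (Z t) \<noteq> 0" using Qt0[OF assms] by auto
  have "((\<lambda>t. eta - Z t) has_real_derivative (- ((Q (Z t))^2 / (4*PP)))) (at t)"
    using DERIV_diff[OF DERIV_const Z_deriv[OF assms]] by simp
  then have "((\<lambda>t. (eta - Z t) / sqrt p) has_real_derivative (- ((Q (Z t))^2 / (4*PP))) / sqrt p) (at t)"
    by (rule DERIV_cdivide)
  then show ?thesis unfolding V_def[abs_def] X_def PP_def aux_V[OF p q] .
qed

lemma t0_sum: "2 \<le> t0 + 1/t0"
proof -
  have "0 \<le> (t0 - 1)^2" by simp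
  then have "2*t0 \<le> t0*t0 + 1" by (simp add: power2_eq_square algebra_simps)
  then show ?thesis using t0 by (simp add: field_simps)
qed

lemma X_gt: assumes "t0 \<le> z" "z < 1/t0" shows "2*p / Q (1/t0) < 2*p / Q z"
proof -
  have "Q (1/t0) - Q z = (1/t0 - z) * (1/t0 + z - 2*eta)" unfolding Q_def by (simp add: power2_eq_square algebra_simps)
  moreover have "0 < 1/t0 + z - 2*eta" using t0_sum assms eta by linarith
  moreover have "0 < 1/t0 - z" using assms by simp
  ultimately have "0 < Q (1/t0) - Q z" by simp
  then have "Q z < Q (1/t0)" by simp
  moreover have "0 < Q z" using Qpos assms t0 by auto
  ultimately show ?thesis using p by (intro divide_strict_left_mono) auto
qed

lemma exist: "radial_sol (2*p / Q t0) ((eta - t0)/sqrt p) TT X \<and> X TT = 2*p / Q (1/t0) \<and>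
   (\<forall>t\<in>{0..<TT}. X t \<noteq> 2*p / Q (1/t0))"
proof (intro conjI ballI)
  show "radial_sol (2*p / Q t0) ((eta - t0)/sqrt p) TT X"
    unfolding radial_sol_def
  proof (intro conjI ballI exI[of _ V])
    show "0 \<le> TT" using TT_pos by simp
    show "X 0 = 2*p / Q t0" unfolding X_def Z0 ..
    show "V 0 = (eta - t0)/sqrt p" unfolding V_def Z0 ..
    fix t assume t: "t \<in> {0..TT}"
    show "0 < X t" unfolding X_def using Qt0[OF t] p by simp
    show "(X has_real_derivative V t) (at t within {0..TT})"
      using X_deriv[OF t] by (rule has_field_derivative_at_within)
    show "(V has_real_derivative - 1 / (X t)^2) (at t within {0..TT})"
      using V_deriv[OF t] by (rule has_field_derivative_at_within)
  qed
  show "X TT = 2*p / Q (1/t0)" unfolding X_def ZT ..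
  fix t assume t: "t \<in> {0..<TT}"
  then have "t \<in> {0..TT}" by auto
  then show "X t \<noteq> 2*p / Q (1/t0)" unfolding X_def using X_gt[OF Z_bounds(1) Z_lt[OF t]] by auto
qed

lemma unique:
  assumes rs: "radial_sol (2*p / Q t0) ((eta - t0)/sqrt p) T' y"
    and yT: "y T' = 2*p / Q (1/t0)" and nohit: "\<forall>t\<in>{0..<T'}. y t \<noteq> 2*p / Q (1/t0)"
  shows "T' = TT"
proof -
  obtain y' where T'0: "0 \<le> T'" and y0: "y 0 = 2*p / Q t0" and ypos: "\<And>t. t \<in> {0..T'} \<Longrightarrow> 0 < y t"
    and y'0: "y' 0 = (eta - t0)/sqrt p"
    and dy: "\<And>t. t \<in> {0..T'} \<Longrightarrow> (y has_real_derivative y' t) (at t within {0..T'})"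
    and dy': "\<And>t. t \<in> {0..T'} \<Longrightarrow> (y' has_real_derivative - 1 / (y t)^2) (at t within {0..T'})"
    using rs unfolding radial_sol_def by blast
  define H where "H = (eta^2 - 1) / (2*p)"
  have sp: "sqrt p * sqrt p = p" using p by simp
  have q0: "Q t0 > 0" using Qpos t0 by auto
  have en_d: "((\<lambda>t. (y' t)^2/2 - 1 / y t) has_real_derivative 0) (at t within {0..T'})"
    if t: "t \<in> {0..T'}" for t
  proof -
    have yn: "y t \<noteq> 0" using ypos[OF t] by auto
    have D: "((\<lambda>t. (y' t)^2/2 - inverse (y t)) has_real_derivative 0) (at t within {0..T'})"
      apply (rule DERIV_cong[OF DERIV_diff[OF DERIV_cdivide[OF DERIV_power[OF dy'[OF t]]] DERIV_inverse_fun[OF dy[OF t] yn]]])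
      apply (simp only: of_nat_numeral numeral_2_eq_2 diff_Suc_Suc power_one_right power_Suc power_0 diff_zero mult_1_right)
      by (simp add: inverse_eq_divide)
    show ?thesis using D by (simp add: inverse_eq_divide)
  qed
  obtain cc where cc: "\<And>t. t \<in> {0..T'} \<Longrightarrow> (y' t)^2/2 - 1 / y t = cc"
    using has_field_derivative_zero_constant[of "{0..T'}", OF convex_real_interval(5) en_d] by blast
  have "cc = H"
  proof -
    have "cc = (y' 0)^2/2 - 1 / y 0" using cc[of 0] T'0 by auto
    also have "\<dots> = H" unfolding y'0 y0 H_def Q_def using p q0 unfolding Q_def
      by (simp add: field_simps power2_eq_square sp; simp add: algebra_simps)
    finally show ?thesis .
  qed
  define ze where "ze t = eta - sqrt p * y' t" for t
  have yform: "y t = 2*p / Q (ze t)" "0 < Q (ze t)" if t: "t \<in> {0..T'}" for t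
  proof -
    have e: "1 / y t = (y' t)^2/2 - H" using cc[OF t] \<open>cc = H\<close> by simp
    have "y' t = (eta - ze t) / sqrt p" unfolding ze_def using p by simp
    then have y2: "(y' t)^2 = (eta - ze t)^2 / p" using p by (simp add: power_divide)
    have e2: "1 / y t = Q (ze t) / (2*p)" unfolding e H_def Q_def y2 using p by (intro aux_en) simp
    have "0 < 1 / y t" using ypos[OF t] by simp
    then have "0 < Q (ze t) / (2*p)" unfolding e2 .
    then show "0 < Q (ze t)" using p by (simp add: zero_less_divide_iff)
    have "y t = 1 / (1 / y t)" by simp
    also have "\<dots> = 2*p / Q (ze t)" unfolding e2 by simp
    finally show "y t = 2*p / Q (ze t)" .
  qed
  have dze: "(ze has_real_derivative sqrt p / (y t)^2) (at t within {0..T'})" if t: "t \<in> {0..T'}" for t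
  proof -
    have "(ze has_real_derivative 0 - sqrt p * (- 1 / (y t)^2)) (at t within {0..T'})"
      unfolding ze_def[abs_def] by (rule DERIV_diff[OF DERIV_const DERIV_cmult[OF dy'[OF t]]])
    then show ?thesis by simp
  qed
  have zecont: "continuous_on {0..T'} ze" by (rule DERIV_continuous_on[OF dze])
  have ze0: "ze 0 = t0" unfolding ze_def y'0 using p by simp
  have zege: "t0 \<le> ze t" if t: "t \<in> {0..T'}" for t
  proof (cases "t = 0")
    case True then show ?thesis using ze0 by simp
  next
    case False
    have t0': "0 < t" using t False by auto
    have "ze 0 < ze t"
    proof (rule DERIV_pos_imp_increasing_open[OF t0'])
      fix x assume x: "0 < x" "x < t"
      have xT: "x \<in> {0..T'}" using x t by auto
      have xi: "x \<in> interior {0..T'}" using x t by auto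
      have "(ze has_real_derivative sqrt p / (y x)^2) (at x)"
        using dze[OF xT] unfolding at_within_interior[OF xi] .
      moreover have "0 < sqrt p / (y x)^2" using p ypos[OF xT] by simp
      ultimately show "\<exists>d. (ze has_real_derivative d) (at x) \<and> 0 < d" by blast
    next
      show "continuous_on {0..t} ze" by (rule continuous_on_subset[OF zecont]) (use t in auto)
    qed
    then show ?thesis using ze0 by simp
  qed
  have phid: "((\<lambda>t. tau (ze t) - t) has_real_derivative 0) (at t within {0..T'})" if t: "t \<in> {0..T'}" for t
  proof -
    have zp: "0 < ze t" using zege[OF t] t0 by auto
    have D: "((\<lambda>t. tau (ze t) - t) has_real_derivative kk (ze t) * (sqrt p / (y t)^2) - 1) (at t within {0..T'})"
      by (rule derivative_eq_intros DERIV_chain'[OF dze[OF t] tau_deriv[OF zp]] refl)+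
    have E: "kk (ze t) * (sqrt p / (y t)^2) = 1"
      unfolding kk_def yform(1)[OF t] PP_def using yform(2)[OF t] p
      by (simp add: field_simps power2_eq_square sp)
    show ?thesis using D unfolding E by simp
  qed
  obtain c2 where c2: "\<And>t. t \<in> {0..T'} \<Longrightarrow> tau (ze t) - t = c2"
    using has_field_derivative_zero_constant[of "{0..T'}", OF convex_real_interval(5) phid] by blast
  have tz: "tau (ze t) = t + tau t0" if "t \<in> {0..T'}" for t
    using c2[OF that] c2[of 0] T'0 ze0 by auto
  have t1pos: "0 < 1/t0" using t0 by auto
  show "T' = TT"
  proof (rule ccontr)
    assume "T' \<noteq> TT"
    then consider "T' < TT" | "TT < T'" by linarith
    then show False
    proof cases
      case 1
      have Ti: "T' \<in> {0..T'}" using T'0 by auto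
      have "tau (ze T') < tau (1/t0)" using tz[OF Ti] 1 unfolding TT_def by simp
      then have "ze T' < 1/t0" using tau_le_iff[of "1/t0" "ze T'"] zege[OF Ti] t0 by auto
      then have "2*p / Q (1/t0) < y T'" using X_gt[OF zege[OF Ti]] yform(1)[OF Ti] by simp
      then show False using yT by simp
    next
      case 2
      have Ti: "TT \<in> {0..T'}" using 2 TT_pos by auto
      have "tau (ze TT) = tau (1/t0)" using tz[OF Ti] unfolding TT_def by simp
      then have "ze TT = 1/t0" using tau_eq_iff[of "ze TT" "1/t0"] zege[OF Ti] t0 by auto
      then have "y TT = 2*p / Q (1/t0)" using yform(1)[OF Ti] by simp
      moreover have "TT \<in> {0..<T'}" using 2 TT_pos by auto
      ultimately show False using nohit by blast
    qed
  qed
qed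

lemma TDR_eq: "TDR (2*p / Q t0) (2*p / Q (1/t0)) ((eta - t0)/sqrt p) = TT"
  unfolding TDR_def
proof (rule the_equality)
  show "\<exists>x. radial_sol (2*p / Q t0) ((eta - t0)/sqrt p) TT x \<and> x TT = 2*p / Q (1/t0) \<and>
     (\<forall>t\<in>{0..<TT}. x t \<noteq> 2*p / Q (1/t0))" using exist by blast
  show "\<And>T. \<exists>x. radial_sol (2*p / Q t0) ((eta - t0)/sqrt p) T x \<and> x T = 2*p / Q (1/t0) \<and>
     (\<forall>t\<in>{0..<T}. x t \<noteq> 2*p / Q (1/t0)) \<Longrightarrow> T = TT" using unique by blast
qed

lemma TT_integral: "TT = integral {t0..1/t0} kk"
proof -
  have "integral {0..t0} kk + integral {t0..1/t0} kk = integral {0..1/t0} kk"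
    by (rule Henstock_Kurzweil_Integration.integral_combine) (use t0 t0_le_t1 in \<open>auto intro: integrable_continuous_real kk_cont\<close>)
  then show ?thesis unfolding TT_def tau_def by simp
qed

end



lemma powr32: "0 < (p::real) \<Longrightarrow> p powr (3/2) = p * sqrt p"
proof -
  assume "0 < p"
  have "p powr (3/2) = p powr (1 + 1/2)" by simp
  also have "\<dots> = p powr 1 * p powr (1/2)" by (rule powr_add)
  also have "\<dots> = p * p powr (1/2)" using \<open>0<p\<close> by simp
  also have "\<dots> = p * sqrt p" using \<open>0<p\<close> by (simp add: powr_half_sqrt)
  finally show ?thesis .
qed

lemma aux_div: "(w::real) \<noteq> 0 \<Longrightarrow> 2/w*(P*w^2/q) = 2*P*w/q"
  by (simp add: power2_eq_square)

lemma aux_div2: "(t::real) \<noteq> 0 \<Longrightarrow> q \<noteq> 0 \<Longrightarrow> -(1/t)/(q/t^2) = -t/q"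
  by (simp add: field_simps power2_eq_square)

lemma aux_div3: "2*P*(1+z^2)/D - 2*P*((z^2-1)/D) = 4*P/(D::real)"
proof -
  have "2*P*(1+z^2)/D - 2*P*((z^2-1)/D) = (2*P*(1+z^2) - 2*P*(z^2-1))/D"
    by (metis diff_divide_distrib times_divide_eq_right)
  also have "\<dots> = 4*P/D" by (simp add: algebra_simps)
  finally show ?thesis .
qed

lemma sin_2arctan: "sin (2 * arctan z) = 2*z / (1 + z^2)"
proof -
  have "sin (2 * arctan z) = 2 * sin (arctan z) * cos (arctan z)" by (rule sin_double)
  also have "\<dots> = 2 * z / (sqrt (1+z^2) * sqrt (1+z^2))" by (simp add: sin_arctan cos_arctan)
  also have "\<dots> = 2*z / (1+z^2)" by (simp add: add_pos_nonneg)
  finally show ?thesis .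
qed

lemma angular:
  fixes rA thA eta :: real
  assumes rA: "0 < rA" and th: "0 < thA" "thA < pi/2" and eta: "eta < 1"
  defines "t0 \<equiv> tan (thA/2)" and "p \<equiv> rA * (1 - eta * sin thA)"
  shows "TDS rA thA eta = integral {t0..1/t0} (\<lambda>z. 4*(p * sqrt p) / (1 + z^2 - 2*eta*z)^2)"
proof -
  define s where "s = sin thA"
  define P where "P = p * sqrt p"
  define Q where "Q z = 1 + z^2 - 2*eta*z" for z
  have s: "0 < s" "s \<le> 1" unfolding s_def using th sin_gt_zero[of thA] by auto
  have es: "eta * s < 1"
  proof (cases "eta \<le> 0")
    case True then have "eta * s \<le> 0" using s by (simp add: mult_nonpos_nonneg)
    then show ?thesis by simp
  next
    case False then have "eta * s \<le> eta * 1" using s by (intro mult_left_mono) auto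
    then show ?thesis using eta by simp
  qed
  have p: "0 < p" unfolding p_def s_def[symmetric] using es rA by simp
  have P: "0 < P" unfolding P_def using p by simp
  have c: "0 < cos thA" using th cos_gt_zero_pi[of thA] by auto
  have sc: "s^2 + (cos thA)^2 = 1" unfolding s_def by simp
  have t0e: "t0 = s / (cos thA + 1)" unfolding t0_def s_def using tan_half[of "thA/2"] by simp
  have t0: "0 < t0" "t0 < 1" unfolding t0e using s c by (auto simp: field_simps)
  have "t0 * t0 < 1 * 1" using t0 by (intro mult_strict_mono) auto
  then have t01: "t0 < 1/t0" using t0 by (simp add: field_simps)
  have at0: "2 * arctan t0 = thA" unfolding t0_def using th by (simp add: arctan_tan)
  have at1: "2 * arctan (1/t0) = pi - thA"
    using arctan_inverse[of t0] t0 at0 by (simp add: algebra_simps inverse_eq_divide)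
  define f where "f th = rA powr (3/2) * (1 - eta * sin thA) powr (3/2) / (1 - eta * sin th)^2" for th
  have fP: "f th = P / (1 - eta * sin th)^2" for th
    unfolding f_def P_def p_def using rA es s_def powr32[OF p[unfolded p_def]]
    by (simp add: powr_mult[symmetric])
  have pos: "0 < 1 - eta * sin th" if "th \<in> {thA..pi-thA}" for th
  proof -
    have "0 \<le> sin th" "sin th \<le> 1" using that th by (auto intro!: sin_ge_zero)
    show ?thesis
    proof (cases "eta \<le> 0")
      case True then have "eta * sin th \<le> 0" using \<open>0 \<le> sin th\<close> by (simp add: mult_nonpos_nonneg)
      then show ?thesis by simp
    next
      case False then have "eta * sin th \<le> eta * 1" using \<open>sin th \<le> 1\<close> by (intro mult_left_mono) auto
      then show ?thesis using eta by simp
    qed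
  qed
  have fcont: "continuous_on {thA..pi-thA} f"
    unfolding f_def
    by (intro continuous_intros) (use pos in \<open>fastforce\<close>)
  have sub: "((\<lambda>z. (2 / (1+z^2)) *\<^sub>R f (2 * arctan z)) has_integral
      integral {2 * arctan t0..2 * arctan (1/t0)} f) {t0..1/t0}"
  proof (rule has_integral_substitution[where c=thA and d="pi-thA"])
    show "t0 \<le> 1/t0" using t01 by simp
    show "2 * arctan t0 \<le> 2 * arctan (1/t0)" using t01 arctan_monotone' by simp
    show "(\<lambda>z. 2 * arctan z) ` {t0..1/t0} \<subseteq> {thA..pi-thA}"
    proof
      fix y assume "y \<in> (\<lambda>z. 2 * arctan z) ` {t0..1/t0}"
      then obtain z where "t0 \<le> z" "z \<le> 1/t0" "y = 2 * arctan z" by auto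
      then show "y \<in> {thA..pi-thA}" using arctan_monotone'[of t0 z] arctan_monotone'[of z "1/t0"] at0 at1 by auto
    qed
    show "continuous_on {thA..pi-thA} f" by (rule fcont)
    fix x
    show "((\<lambda>z. 2 * arctan z) has_real_derivative 2 / (1 + x^2)) (at x within {t0..1/t0})"
      by (rule derivative_eq_intros refl | simp add: divide_inverse)+
  qed
  have TDS_eq: "TDS rA thA eta = integral {thA..pi-thA} f" unfolding TDS_def f_def ..
  have Qpos: "0 < Q z" if "0 \<le> z" for z
  proof (cases "eta \<le> 0")
    case True then have "eta * z \<le> 0" using that by (simp add: mult_nonpos_nonneg)
    moreover have "0 \<le> z^2" by simp
    ultimately show ?thesis unfolding Q_def by linarith
  next
    case False
    have "Q z = (z-eta)^2 + (1 - eta^2)" unfolding Q_def by (simp add: power2_eq_square algebra_simps)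
    moreover have "eta^2 < 1" using False eta by (simp add: abs_square_less_1)
    moreover have "0 \<le> (z-eta)^2" by simp
    ultimately show ?thesis by linarith
  qed
  have g1: "((\<lambda>z. 2*P*(1+z^2) / (Q z)^2) has_integral TDS rA thA eta) {t0..1/t0}"
  proof -
    have "(2 / (1+z^2)) *\<^sub>R f (2 * arctan z) = 2*P*(1+z^2) / (Q z)^2" if "z \<in> {t0..1/t0}" for z
    proof -
      have z2: "(0::real) < 1 + z^2" by (simp add: add_pos_nonneg)
      then have z2': "1 + z^2 \<noteq> 0" by simp
      have "1 - eta * (2*z/(1+z^2)) = Q z / (1+z^2)" unfolding Q_def
        using z2' by (simp add: field_simps)
      have q: "Q z \<noteq> 0" using Qpos[of z] that t0 by auto
      have "(2 / (1+z^2)) *\<^sub>R f (2 * arctan z) = 2/(1+z^2) * (P / (Q z/(1+z^2))^2)"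
        unfolding fP sin_2arctan \<open>1 - eta * (2*z/(1+z^2)) = Q z / (1+z^2)\<close> by simp
      also have "\<dots> = 2/(1+z^2) * (P*(1+z^2)^2/(Q z)^2)" by (simp add: power_divide)
      also have "\<dots> = 2*P*(1+z^2) / (Q z)^2"
        using aux_div[OF z2'] .
      finally show ?thesis .
    qed
    then show ?thesis using sub unfolding at0 at1 TDS_eq by (subst (asm) has_integral_cong) auto
  qed
  have g2: "((\<lambda>z. (z^2 - 1) / (Q z)^2) has_integral ((- (1/t0) / Q (1/t0)) - (- t0 / Q t0))) {t0..1/t0}"
  proof (rule fundamental_theorem_of_calculus)
    show "t0 \<le> 1/t0" using t01 by simp
    fix x assume x: "x \<in> {t0..1/t0}"
    then have q: "Q x \<noteq> 0" using Qpos[of x] t0 by auto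
    have D: "((\<lambda>z. - z / (1 + z^2 - 2*eta*z)) has_real_derivative
       (- (1 + x^2 - 2*eta*x) + x * (2*x - 2*eta)) / (1 + x^2 - 2*eta*x)^2) (at x within {t0..1/t0})"
      by (rule derivative_eq_intros refl | use q in \<open>simp add: Q_def field_simps power2_eq_square\<close>)+
    have E: "(- (1 + x^2 - 2*eta*x) + x * (2*x - 2*eta)) / (1 + x^2 - 2*eta*x)^2 = (x^2 - 1) / (1 + x^2 - 2*eta*x)^2"
      by (simp add: algebra_simps power2_eq_square)
    show "((\<lambda>z. - z / Q z) has_vector_derivative (x^2 - 1) / (Q x)^2) (at x within {t0..1/t0})"
      unfolding Q_def has_real_derivative_iff_has_vector_derivative[symmetric] using D[unfolded E] .
  qed
  have F: "- (1/t0) / Q (1/t0) = - t0 / Q t0"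
  proof -
    have "Q (1/t0) = Q t0 / t0^2" unfolding Q_def using t0 by (simp add: field_simps power2_eq_square)
    moreover have "Q t0 \<noteq> 0" using Qpos[of t0] t0 by simp
    ultimately show ?thesis using t0 aux_div2[of t0 "Q t0"] by simp
  qed
  have "((\<lambda>z. 2*P*(1+z^2) / (Q z)^2 - 2*P * ((z^2 - 1) / (Q z)^2)) has_integral
      (TDS rA thA eta - 2*P*0)) {t0..1/t0}"
    by (rule has_integral_diff[OF g1 has_integral_mult_right[OF g2[unfolded F, simplified]]])
  moreover have "2*P*(1+z^2) / (Q z)^2 - 2*P * ((z^2 - 1) / (Q z)^2) = 4*(p * sqrt p) / (1 + z^2 - 2*eta*z)^2" for z
    unfolding P_def Q_def by (rule aux_div3)
  ultimately show ?thesis by (simp add: integral_unique)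
qed



lemma frac_lt:
  fixes n1 n2 d1 d2 :: real
  assumes "n1 * d2 < n2 * d1" "0 < d1" "0 < d2"
  shows "n1 / d1 < n2 / d2"
proof -
  have "n1 / d1 = n1 * d2 / (d1 * d2)" using assms by simp
  also have "\<dots> < n2 * d1 / (d1 * d2)" using assms by (intro divide_strict_right_mono) auto
  also have "\<dots> = n2 / d2" using assms by simp
  finally show ?thesis .
qed

lemma aux_q: "(q::real) \<noteq> 0 \<Longrightarrow> d \<noteq> 0 \<Longrightarrow> r \<noteq> 0 \<Longrightarrow> (2*q/d)/(r*q) = 2/(r*d)"
  by (simp add: field_simps)

lemma aux_r: "(r::real) \<noteq> 0 \<Longrightarrow> 2/(r*d)*(r*x) = 2*x/d"
  by simp

lemma bij_lemma:
  fixes rA s c t0 :: real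
  assumes rA: "0 < rA" and s: "0 < s" "s \<le> 1" and c: "0 < c" and sc: "s^2 + c^2 = 1"
    and t0: "t0 = s / (1 + c)"
  shows "bij_betw (\<lambda>eta. (eta - t0) / sqrt (rA * (1 - eta * s))) {..<1} {..<sqrt (2 / (rA * (1 + c)))}"
proof -
  define F where "F eta = (eta - t0) / sqrt (rA * (1 - eta * s))" for eta
  have ts: "t0 * s = 1 - c"
  proof -
    have "t0 * s = s^2 / (1 + c)" unfolding t0 by (simp add: power2_eq_square)
    also have "\<dots> = (1 - c) * (1 + c) / (1 + c)" using sc by (simp add: algebra_simps power2_eq_square)
    also have "\<dots> = 1 - c" using c by simp
    finally show ?thesis .
  qed
  have c1: "1 + c \<noteq> 0" using c by simp
  have t0pos: "0 < t0" unfolding t0 using s c by simp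
  have t0lt: "t0 < 1" unfolding t0 using s c by simp
  have t0sq: "t0^2 + 1 = 2 / (1 + c)"
  proof -
    have "t0^2 = t0 * s / (1 + c)" unfolding t0 by (simp add: power2_eq_square)
    then have "t0^2 = (1 - c) / (1 + c)" using ts by simp
    then show ?thesis using c by (simp add: field_simps)
  qed
  have es: "eta * s < 1" if "eta < 1" for eta
  proof (cases "eta \<le> 0")
    case True then have "eta * s \<le> 0" using s by (simp add: mult_nonpos_nonneg)
    then show ?thesis by simp
  next
    case False then have "eta * s \<le> eta * 1" using s by (intro mult_left_mono) auto
    then show ?thesis using that by simp
  qed
  have ppos: "0 < rA * (1 - eta * s)" if "eta < 1" for eta using es[OF that] rA by simp
  define vE where "vE = sqrt (2 / (rA * (1 + c)))"
  have vEpos: "0 < vE" unfolding vE_def using rA c by simp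
  have vE2: "vE^2 = 2 / (rA * (1 + c))" unfolding vE_def using rA c by simp
  have mono: "F a < F b" if ab: "a < b" "b < 1" for a b
  proof -
    have pa: "0 < rA * (1 - a * s)" and pb: "0 < rA * (1 - b * s)" using ppos ab by auto
    have pab: "rA * (1 - b * s) < rA * (1 - a * s)" using ab s rA by simp
    have da: "0 < sqrt (rA * (1 - a * s))" and db: "0 < sqrt (rA * (1 - b * s))" using pa pb by auto
    have dab: "sqrt (rA * (1 - b * s)) < sqrt (rA * (1 - a * s))" using pab by simp
    consider "t0 < a" | "a \<le> t0" "t0 < b" | "b \<le> t0" using ab by linarith
    then show ?thesis
    proof cases
      case 1
      have "(a - t0) * sqrt (rA * (1 - b * s)) < (b - t0) * sqrt (rA * (1 - a * s))"
      proof -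
        have "(a - t0) * sqrt (rA * (1 - b * s)) < (b - t0) * sqrt (rA * (1 - b * s))"
          using ab db by (intro mult_strict_right_mono) auto
        also have "\<dots> < (b - t0) * sqrt (rA * (1 - a * s))"
          using 1 ab dab by (intro mult_strict_left_mono) auto
        finally show ?thesis .
      qed
      then show ?thesis unfolding F_def using da db by (rule frac_lt)
    next
      case 2
      have "F a \<le> 0" unfolding F_def using 2 da by (simp add: divide_nonpos_pos)
      moreover have "0 < F b" unfolding F_def using 2 db by simp
      ultimately show ?thesis by simp
    next
      case 3
      define u1 where "u1 = t0 - a"
      define u2 where "u2 = t0 - b"
      have u: "u2 < u1" "0 \<le> u2" unfolding u1_def u2_def using ab 3 by auto
      have e1: "rA * (1 - a * s) = rA * (c + u1 * s)" unfolding u1_def using ts by (simp add: algebra_simps)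
      have e2: "rA * (1 - b * s) = rA * (c + u2 * s)" unfolding u2_def using ts by (simp add: algebra_simps)
      have key: "u2^2 * (rA * (c + u1 * s)) < u1^2 * (rA * (c + u2 * s))"
      proof -
        have "u1^2 * (c + u2 * s) - u2^2 * (c + u1 * s) = c * (u1 - u2) * (u1 + u2) + s * u1 * u2 * (u1 - u2)"
          by (simp add: algebra_simps power2_eq_square)
        moreover have "0 < c * (u1 - u2) * (u1 + u2)" using u c by simp
        moreover have "0 \<le> s * u1 * u2 * (u1 - u2)" using u s by simp
        ultimately have "u2^2 * (c + u1 * s) < u1^2 * (c + u2 * s)" by linarith
        then show ?thesis using rA by simp
      qed
      have "sqrt (u2^2 * (rA * (c + u1 * s))) < sqrt (u1^2 * (rA * (c + u2 * s)))"
        using key by simp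
      then have "u2 * sqrt (rA * (1 - a * s)) < u1 * sqrt (rA * (1 - b * s))"
        unfolding e1 e2 real_sqrt_mult using u by simp
      then have "(a - t0) * sqrt (rA * (1 - b * s)) < (b - t0) * sqrt (rA * (1 - a * s))"
        unfolding u1_def u2_def by (simp add: algebra_simps)
      then show ?thesis unfolding F_def using da db by (rule frac_lt)
    qed
  qed
  have inj: "inj_on F {..<1}"
  proof (rule inj_onI)
    fix a b assume "a \<in> {..<1}" "b \<in> {..<1}" "F a = F b"
    then show "a = b" using mono by (metis lessThan_iff linorder_neqE_linordered_idom order_less_irrefl)
  qed
  have below: "F eta < vE" if "eta < 1" for eta
  proof (cases "eta \<le> t0")
    case True
    then have "F eta \<le> 0" unfolding F_def using ppos[OF that] by (simp add: divide_nonpos_pos)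
    then show ?thesis using vEpos by simp
  next
    case False
    have p: "0 < rA * (1 - eta * s)" using ppos[OF that] .
    have "(eta - t0)^2 = eta^2 - 1 + 2 * (1 - eta * s) / (1 + c)"
    proof -
      have "(eta - t0)^2 = eta^2 - 2 * eta * t0 + (t0^2 + 1) - 1" by (simp add: power2_eq_square algebra_simps)
      also have "\<dots> = eta^2 - 1 + 2 * (1 - eta * s) / (1 + c)"
      proof -
        have "2*eta*t0 = 2 * eta * s / (1+c)" unfolding t0 by simp
        moreover have "2 * (1 - eta * s)/(1+c) = 2/(1+c) - 2 * eta * s / (1+c)" by (simp add: diff_divide_distrib right_diff_distrib)
        ultimately show ?thesis unfolding t0sq by linarith
      qed
      finally show ?thesis .
    qed
    moreover have "eta^2 < 1" using False that t0pos by (simp add: abs_square_less_1)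
    ultimately have "(eta - t0)^2 < 2 * (1 - eta * s) / (1 + c)" by linarith
    then have lt: "(eta - t0)^2 / (rA * (1 - eta * s)) < (2 * (1 - eta * s) / (1 + c)) / (rA * (1 - eta * s))"
      by (rule divide_strict_right_mono[OF _ p])
    have "(2 * (1 - eta * s) / (1 + c)) / (rA * (1 - eta * s)) = vE^2"
      unfolding vE2 using aux_q[of "1 - eta * s" "1 + c" rA] p rA c1 es[OF that] by (simp add: mult.commute)
    then have "(eta - t0)^2 / (rA * (1 - eta * s)) < vE^2" using lt by simp
    then have "(F eta)^2 < vE^2" unfolding F_def using p by (simp add: power_divide)
    then show ?thesis by (rule power2_less_imp_less) (use vEpos in simp)
  qed
  have surj: "\<exists>eta<1. F eta = w" if w: "w < vE" for w
  proof -
    define b where "b = rA * s"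
    define D where "D = sqrt (w^2 * b^2 + 4 * rA * c)"
    define m where "m = (D - w * b) / 2"
    define eta where "eta = t0 + w * m"
    have "0 \<le> w^2 * b^2" by (intro mult_nonneg_nonneg) auto
    moreover have "0 < 4 * rA * c" using rA c by simp
    ultimately have Dnn: "0 \<le> w^2 * b^2 + 4 * rA * c" by linarith
    then have D2: "D^2 = w^2 * b^2 + 4 * rA * c" unfolding D_def by (rule real_sqrt_pow2)
    have Dpos: "0 \<le> D" unfolding D_def using Dnn by simp
    have "\<bar>w * b\<bar> < D"
    proof -
      have "(w * b)^2 < D^2" unfolding D2 using rA c by (simp add: power_mult_distrib)
      then show ?thesis using Dpos by (metis abs_le_square_iff abs_of_nonneg not_le)
    qed
    then have "w * b < D" by linarith
    then have mpos: "0 < m" unfolding m_def by simp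
    have pm: "rA * (1 - eta * s) = m^2"
    proof -
      have "rA * (1 - eta * s) = rA - rA * t0 * s - b * w * m" unfolding eta_def b_def by (simp add: algebra_simps)
      also have "\<dots> = rA * c - b * w * m"
      proof -
        have "rA * t0 * s = rA * (1 - c)" using ts by (simp add: mult.assoc)
        then show ?thesis by (simp add: algebra_simps)
      qed
      also have "\<dots> = m^2"
      proof -
        have hm: "2*m = D - w*b" unfolding m_def by simp
        have "4 * m^2 = (2*m)^2" by (simp add: power2_eq_square)
        then have h1: "4 * m^2 = D^2 - 2*D*(w*b) + (w*b)^2" unfolding hm by (simp add: power2_eq_square algebra_simps)
        have "4 * (rA * c - b * w * m) = 4*rA*c - 2*(w*b)*(2*m)" by (simp add: algebra_simps)
        then have h2: "4 * (rA * c - b * w * m) = 4*rA*c - 2*(w*b)*D + 2*(w*b)^2" unfolding hm by (simp add: power2_eq_square algebra_simps)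
        have h3: "D^2 = (w*b)^2 + 4 * rA * c" using D2 by (simp add: power_mult_distrib)
        show ?thesis using h1 h2 h3 by (simp add: algebra_simps)
      qed
      finally show ?thesis .
    qed
    have eta1: "eta < 1"
    proof (rule ccontr)
      assume "\<not> eta < 1"
      then have e1: "1 \<le> eta" by simp
      have "1 * (rA * s) \<le> eta * (rA * s)" using e1 s rA by (intro mult_right_mono) auto
      then have "m^2 \<le> rA * (1 - s)" using pm by (simp add: algebra_simps)
      have wm: "1 - t0 \<le> w * m" using e1 unfolding eta_def by simp
      then have wpos: "0 < w" using t0lt mpos by (metis diff_gt_0_iff_gt less_le_trans zero_less_mult_pos2 mult.commute)
      have "(1 - t0)^2 = 2 * (1 - s) / (1 + c)"
      proof -
        have "(1 - t0)^2 = (t0^2 + 1) - 2 * t0" by (simp add: power2_eq_square algebra_simps)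
        also have "\<dots> = 2 * (1 - s) / (1 + c)"
        proof -
          have "2 * t0 = 2 * s / (1+c)" unfolding t0 by simp
          moreover have "2 * (1 - s) / (1+c) = 2/(1+c) - 2 * s / (1+c)" by (simp add: diff_divide_distrib right_diff_distrib)
          ultimately show ?thesis unfolding t0sq by linarith
        qed
        finally show ?thesis .
      qed
      moreover have "vE^2 * (rA * (1 - s)) = 2 * (1 - s) / (1 + c)" unfolding vE2 using rA by (rule aux_r[OF less_imp_neq[symmetric]])
      ultimately have "(1 - t0)^2 = vE^2 * (rA * (1 - s))" by simp
      also have "\<dots> \<ge> vE^2 * m^2" using \<open>m^2 \<le> rA * (1 - s)\<close> by (simp add: mult_left_mono)
      finally have "vE^2 * m^2 \<le> (1 - t0)^2" .
      also have "(1 - t0)^2 \<le> (w * m)^2" using wm t0lt by (intro power_mono) auto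
      finally have "vE^2 * m^2 \<le> w^2 * m^2" by (simp add: power_mult_distrib)
      then have "vE^2 \<le> w^2" using mpos by simp
      then have "vE \<le> w" by (rule power2_le_imp_le) (use wpos in simp)
      then show False using w by simp
    qed
    have "F eta = w * m / m" unfolding F_def pm using mpos eta_def by simp
    then show ?thesis using eta1 mpos by auto
  qed
  have "F ` {..<1} = {..<vE}"
  proof
    show "F ` {..<1} \<subseteq> {..<vE}" using below by auto
    show "{..<vE} \<subseteq> F ` {..<1}" using surj by (auto simp: image_def)
  qed
  then show ?thesis using inj unfolding bij_betw_def F_def[abs_def] vE_def by simp
qed




theorem proposition3:
  fixes rA thA xA xB :: real
  assumes "0 < rA" and "0 < thA" and "thA < pi / 2"
    and "xA + xB = 2 * rA" and "xA - xB = 2 * rA * cos thA"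
  shows "bij_betw (vA xA xB) {..<1} {..<sqrt (2 / xA)} \<and>
    (\<forall>eta < 1. TDS rA thA eta = TDR xA xB (vA xA xB eta) \<and>
               HS rA thA eta = HR xA (vA xA xB eta))"
proof -
  note rA = assms(1) and th = assms(2,3)
  define c where "c = cos thA"
  define s where "s = sin thA"
  define t0 where "t0 = tan (thA/2)"
  have xA: "xA = rA * (1 + c)" and xB: "xB = rA * (1 - c)" using assms(4,5) unfolding c_def by (simp_all add: algebra_simps)
  have s: "0 < s" "s \<le> 1" unfolding s_def using th sin_gt_zero[of thA] by auto
  have c: "0 < c" unfolding c_def using th cos_gt_zero_pi[of thA] by auto
  have c1: "1 + c \<noteq> 0" using c by simp
  have sc: "s^2 + c^2 = 1" unfolding s_def c_def by simp
  have t0e: "t0 = s / (1 + c)" unfolding t0_def s_def c_def using tan_half[of "thA/2"] by (simp add: add.commute)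
  have t0pos: "0 < t0" unfolding t0e using s c by simp
  have t0lt: "t0 < 1" unfolding t0e using s c by simp
  have ts: "t0 * s = 1 - c"
  proof -
    have "t0 * s = s^2 / (1 + c)" unfolding t0e by (simp add: power2_eq_square)
    also have "\<dots> = (1 - c) * (1 + c) / (1 + c)" using sc by (simp add: algebra_simps power2_eq_square)
    also have "\<dots> = 1 - c" using c by simp
    finally show ?thesis .
  qed
  have t0sq: "t0^2 = (1 - c) / (1 + c)"
  proof -
    have "t0^2 = t0 * s / (1 + c)" unfolding t0e by (simp add: power2_eq_square)
    then show ?thesis using ts by simp
  qed
  have sq1: "sqrt (xB / xA) = t0"
  proof -
    have "xB / xA = t0^2" unfolding xA xB t0sq using rA by simp
    then show ?thesis using t0pos by simp
  qed
  have sq2: "sqrt (xA * xB) = rA * s"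
  proof -
    have "xA * xB = rA^2 * (1 - c^2)" unfolding xA xB by (simp add: power2_eq_square algebra_simps)
    also have "1 - c^2 = s^2" using sc by simp
    finally have "xA * xB = (rA * s)^2" by (simp add: power_mult_distrib)
    then show ?thesis using rA s by simp
  qed
  have vAe: "vA xA xB eta = (eta - t0) / sqrt (rA * (1 - eta * s))" for eta
    unfolding vA_def sq1 sq2 using assms(4) by (simp add: algebra_simps)
  have es: "eta * s < 1" if "eta < 1" for eta
  proof (cases "eta \<le> 0")
    case True then have "eta * s \<le> 0" using s by (simp add: mult_nonpos_nonneg)
    then show ?thesis by simp
  next
    case False then have "eta * s \<le> eta * 1" using s by (intro mult_left_mono) auto
    then show ?thesis using that by simp
  qed
  have bij: "bij_betw (vA xA xB) {..<1} {..<sqrt (2 / xA)}"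
    using bij_lemma[OF rA s c sc t0e] unfolding xA[symmetric]
    by (rule bij_betw_cong[THEN iffD2, rotated]) (simp add: vAe)
  have main: "TDS rA thA eta = TDR xA xB (vA xA xB eta) \<and> HS rA thA eta = HR xA (vA xA xB eta)"
    if eta: "eta < 1" for eta
  proof -
    define p where "p = rA * (1 - eta * s)"
    have p: "0 < p" unfolding p_def using es[OF eta] rA by simp
    interpret R: radial_setup p eta t0 using p eta t0pos t0lt by unfold_locales auto
    have Qt0: "R.Q t0 = 2 * (1 - eta * s) / (1 + c)"
    proof -
      have "R.Q t0 * (1 + c) = (1 + c) + t0 * (t0 * (1 + c)) - 2 * eta * (t0 * (1 + c))"
        unfolding R.Q_def by (simp add: algebra_simps power2_eq_square)
      also have "t0 * (1 + c) = s" unfolding t0e using c1 by simp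
      finally have "R.Q t0 * (1 + c) = 2 * (1 - eta * s)" using ts by (simp add: algebra_simps)
      then show ?thesis using c1 by (simp add: field_simps)
    qed
    have q0: "R.Q t0 \<noteq> 0" unfolding Qt0 using es[OF eta] c by simp
    have xAe: "2 * p / R.Q t0 = xA" unfolding Qt0 xA p_def using es[OF eta] c1 by (simp add: field_simps)
    have Q1: "R.Q (1/t0) = R.Q t0 / t0^2" unfolding R.Q_def using t0pos by (simp add: field_simps power2_eq_square)
    have xBe: "2 * p / R.Q (1/t0) = xB"
    proof -
      have "2 * p / R.Q (1/t0) = (2 * p / R.Q t0) * t0^2" unfolding Q1 using q0 t0pos by simp
      also have "\<dots> = xB" unfolding xAe t0sq xA xB using c1 by simp
      finally show ?thesis .
    qed
    have ve: "vA xA xB eta = (eta - t0) / sqrt p" unfolding vAe p_def ..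
    have T: "TDS rA thA eta = TDR xA xB (vA xA xB eta)"
    proof -
      have "TDS rA thA eta = integral {t0..1/t0} (\<lambda>z. 4 * (p * sqrt p) / (1 + z^2 - 2*eta*z)^2)"
        using angular[OF rA th eta] unfolding t0_def p_def s_def by simp
      also have "\<dots> = integral {t0..1/t0} R.kk" unfolding R.kk_def[abs_def] R.PP_def R.Q_def ..
      also have "\<dots> = R.TT" by (rule R.TT_integral[symmetric])
      also have "\<dots> = TDR xA xB (vA xA xB eta)" unfolding ve using R.TDR_eq unfolding xAe xBe by simp
      finally show ?thesis .
    qed
    have H: "HS rA thA eta = HR xA (vA xA xB eta)"
    proof -
      have "HS rA thA eta = (eta^2 - 1) / (2 * p)" unfolding HS_def p_def s_def by simp
      also have "\<dots> = ((eta - t0)^2 - R.Q t0) / (2 * p)" unfolding R.Q_def by (simp add: algebra_simps power2_eq_square)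
      also have "\<dots> = ((eta - t0) / sqrt p)^2 / 2 - 1 / xA" unfolding xAe[symmetric] using p q0
        by (simp add: power_divide field_simps)
      also have "\<dots> = HR xA (vA xA xB eta)" unfolding HR_def ve ..
      finally show ?thesis .
    qed
    show ?thesis using T H by simp
  qed
  show ?thesis using bij main by blast
qed


end
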